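(* Let $k=2$, $0<\theta<1/3$ and $\lambda>\frac{9}{4(1-3\theta)}$. Then every family $(z_{1,i},z_{2,i})_{i\in\mathbb{T}^2}$ of positive numbers satisfying, for all $i$, $z_{1,i}=\lambda\prod_{j\in S(i)}F(z_{1,j},z_{2,j},\theta)$ and $z_{2,i}=\lambda\prod_{j\in S(i)}F(z_{2,j},z_{1,j},\theta)$ satisfies $x_1^*\le z_{j,i}\le x_2^*$ for $j=1,2$ and all $i\in\mathbb{T}^2$.
   Context: $\mathbb{T}^2$ is the rooted binary Cayley tree (each vertex has $2$ direct successors; $S(i)$ is the set of direct successors of $i$). $F(x,y,\theta)=\frac{1+x+\theta y}{1+x+y}$. Under the stated conditions, the system $x=\lambda F(x,y,\theta)^2$, $y=\lambda F(y,x,\theta)^2$ has exactly three positive solutions $(x^*,x^* )$, $(x_1^*,x_2^* )$, $(x_2^*,x_1^* )$, where $x_1^*<x_2^*$. *)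

theory Defs
  imports "HOL-Analysis.Analysis"
begin

(* Vertices of the rooted binary Cayley tree T^2: finite words over bool;
   the root is [] and the direct successors of i are True#i and False#i. *)
type_synonym vertex = "bool list"

definition succs :: "vertex \<Rightarrow> vertex set" where
  "succs i = {b # i | b. True}"

definition F :: "real \<Rightarrow> real \<Rightarrow> real \<Rightarrow> real" where
  "F x y \<theta> = (1 + x + \<theta> * y) / (1 + x + y)"

end

theory Submission
  imports Defs
begin


lemma div_le: fixes a b c d :: real
  assumes "0 < b" "0 < d" "a*d \<le> c*b" shows "a/b \<le> c/d"
  using assms by (simp add: divide_simps)

lemma F_mono:
  assumes "0 < t" "t < 1" "0 \<le> x" "x \<le> x'" "0 \<le> y'" "y' \<le> y"
  shows "F x y t \<le> F x' y' t"
proof -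
  have d1: "(1+x'+t*y)*(1+x+y) - (1+x+t*y)*(1+x'+y) = (x'-x)*((1-t)*y)" by algebra
  have "0 \<le> (x'-x)*((1-t)*y)" using assms by simp
  hence k1: "(1+x+t*y)*(1+x'+y) \<le> (1+x'+t*y)*(1+x+y)" using d1 by linarith
  have s1: "F x y t \<le> F x' y t"
    unfolding F_def using assms k1 by (intro div_le) auto
  have d2: "(1+x'+t*y')*(1+x'+y) - (1+x'+t*y)*(1+x'+y') = (y-y')*((1-t)*(1+x'))" by algebra
  have "0 \<le> (y-y')*((1-t)*(1+x'))" using assms by simp
  hence k2: "(1+x'+t*y)*(1+x'+y') \<le> (1+x'+t*y')*(1+x'+y)" using d2 by linarith
  have "F x' y t \<le> F x' y' t"
    unfolding F_def using assms k2 by (intro div_le) auto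
  with s1 show ?thesis by linarith
qed

lemma F_pos: assumes "0 < t" "0 \<le> x" "0 \<le> y" shows "0 < F x y t"
  unfolding F_def using assms by (simp add: add_pos_nonneg)

lemma F_le1: assumes "0 < t" "t < 1" "0 \<le> x" "0 \<le> y" shows "F x y t \<le> 1"
  unfolding F_def using assms by (simp add: divide_simps mult_left_le_one_le)

lemma asym:
  fixes a b c t :: real
  assumes "0 < t" "t < 1" "0 < b" "b < a" "0 < c"
    and e1: "a*(1+a^2+b^2) = c*(1+a^2+t*b^2)"
    and e2: "b*(1+a^2+b^2) = c*(1+b^2+t*a^2)"
  shows "(a+b)^2 - 1 = c*(1+t)*(a+b)" "a*b*(1+t) = 1 + t*(a+b)^2"
proof -
  have "(a-b)*(1+a^2+b^2) = c*(1-t)*(a-b)*(a+b)" using e1 e2 by algebra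
  hence A: "1+a^2+b^2 = c*(1-t)*(a+b)" using assms by simp
  have S: "(a+b)*(1+a^2+b^2) = c*(2+(1+t)*(a^2+b^2))" using e1 e2 by algebra
  have "c*(1-t)*(a+b)^2 = (a+b)*(1+a^2+b^2)" by (subst A) (simp add: power2_eq_square algebra_simps)
  also note S
  finally have "c*(1-t)*(a+b)^2 = c*(2+(1+t)*(a^2+b^2))" .
  hence "(1-t)*(a+b)^2 = 2+(1+t)*(a^2+b^2)" using assms by simp
  thus q: "a*b*(1+t) = 1 + t*(a+b)^2" by algebra
  have "(1+t)*(1+a^2+b^2) = c*(1-t)*(1+t)*(a+b)" using A by simp
  hence "(1-t)*((a+b)^2 - 1) = (1-t)*(c*(1+t)*(a+b))" using q
    by algebra
  thus "(a+b)^2 - 1 = c*(1+t)*(a+b)" using assms by simp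
qed

lemma uniq:
  fixes a b a' b' c t :: real
  assumes "0 < t" "t < 1" "0 < b" "b < a" "0 < b'" "b' < a'" "0 < c"
    and "a*(1+a^2+b^2) = c*(1+a^2+t*b^2)"
    and "b*(1+a^2+b^2) = c*(1+b^2+t*a^2)"
    and "a'*(1+a'^2+b'^2) = c*(1+a'^2+t*b'^2)"
    and "b'*(1+a'^2+b'^2) = c*(1+b'^2+t*a'^2)"
  shows "a = a' \<and> b = b'"
proof -
  note P = asym[OF assms(1-4,7-9)] and P' = asym[OF assms(1,2,5,6,7,10,11)]
  define p where "p = a+b" define p' where "p' = a'+b'"
  have pp: "p^2 - 1 = c*(1+t)*p" "p'^2 - 1 = c*(1+t)*p'" using P P' p_def p'_def by auto
  have "p > 0" "p' > 0" using assms p_def p'_def by auto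
  have "(p-p')*(p+p' - c*(1+t)) = 0" using pp by algebra
  moreover have "p+p' \<noteq> c*(1+t)"
  proof
    assume h: "p+p' = c*(1+t)"
    hence "p^2 - 1 = (p+p')*p" using pp by simp
    hence "p*p' = -1" by (simp add: power2_eq_square algebra_simps)
    thus False using \<open>p>0\<close> \<open>p'>0\<close> by (smt (verit) mult_pos_pos)
  qed
  ultimately have "p = p'" by simp
  hence "a*b = a'*b'" using P(2) P'(2) p_def p'_def assms(1)
    by (metis add_pos_pos mult_cancel_right less_numeral_extra(1) less_irrefl)
  have "(a-b)^2 = p^2 - 4*(a*b)" using p_def by (simp add: power2_eq_square algebra_simps)
  moreover have "(a'-b')^2 = p'^2 - 4*(a'*b')" using p'_def by (simp add: power2_eq_square algebra_simps)
  ultimately have "(a-b)^2 = (a'-b')^2" using \<open>p = p'\<close> \<open>a*b = a'*b'\<close> by simp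
  hence "a - b = a' - b'" using assms by (smt (verit) power2_eq_iff)
  thus ?thesis using \<open>p = p'\<close> p_def p'_def by auto
qed

lemma sqrt_form:
  assumes "0 < t" "t < 1" "0 < U" "0 < L" "0 < lam" "U = lam * (F U L t)^2"
  shows "sqrt U = sqrt lam * F U L t"
proof -
  have "0 < F U L t" using F_pos assms by auto
  have "sqrt U = sqrt (lam*(F U L t)^2)" using assms(6) by (rule arg_cong)
  thus "sqrt U = sqrt lam * F U L t" using \<open>0 < F U L t\<close> by (simp add: real_sqrt_mult)
qed


lemma prod_succs: "(\<Prod>j\<in>succs i. g j) = g (True#i) * (g (False#i) :: real)"
proof -
  have "succs i = {True#i, False#i}" unfolding succs_def by (auto intro: bool.exhaust)
  thus ?thesis by simp
qed

lemma step_bound: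
  assumes "0 < lam" "0 < t" "t < 1" "0 \<le> l"
    "l \<le> a1" "a1 \<le> u" "l \<le> b1" "b1 \<le> u" "l \<le> a2" "a2 \<le> u" "l \<le> b2" "b2 \<le> u"
  shows "lam*(F l u t)^2 \<le> lam*(F a1 b1 t * F a2 b2 t) \<and> lam*(F a1 b1 t * F a2 b2 t) \<le> lam*(F u l t)^2"
proof -
  have h1: "F l u t \<le> F a1 b1 t" "F a1 b1 t \<le> F u l t" "F l u t \<le> F a2 b2 t" "F a2 b2 t \<le> F u l t"
    using assms by (auto intro!: F_mono)
  have p: "0 < F l u t" using assms by (intro F_pos) auto
  have "(F l u t)^2 \<le> F a1 b1 t * F a2 b2 t" unfolding power2_eq_square
    using h1 p by (intro mult_mono) auto
  moreover have "F a1 b1 t * F a2 b2 t \<le> (F u l t)^2" unfolding power2_eq_square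
    using h1 p by (intro mult_mono) auto
  ultimately show ?thesis using assms(1) by auto
qed

lemma conv_eq:
  fixes a b c t :: real
  assumes "0 < t" "0 < a" "0 < b" "a = c * ((1 + a^2 + t*b^2)/(1 + a^2 + b^2))"
  shows "a*(1+a^2+b^2) = c*(1+a^2+t*b^2)"
proof -
  have "0 < 1 + a^2 + b^2" by (simp add: add_pos_nonneg)
  thus ?thesis using assms(4) by (simp add: field_simps)
qed


theorem mainTheorem16:
  fixes \<theta> lam x1 x2 :: real and z1 z2 :: "vertex \<Rightarrow> real"
  assumes "0 < \<theta>" and "\<theta> < 1/3"
    and "lam > 9 / (4 * (1 - 3 * \<theta>))"
    and "0 < x1" and "x1 < x2"
    and "x1 = lam * (F x1 x2 \<theta>)^2" and "x2 = lam * (F x2 x1 \<theta>)^2"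
    and "\<And>i. 0 < z1 i" and "\<And>i. 0 < z2 i"
    and "\<And>i. z1 i = lam * (\<Prod>j\<in>succs i. F (z1 j) (z2 j) \<theta>)"
    and "\<And>i. z2 i = lam * (\<Prod>j\<in>succs i. F (z2 j) (z1 j) \<theta>)"
  shows "\<forall>i. x1 \<le> z1 i \<and> z1 i \<le> x2 \<and> x1 \<le> z2 i \<and> z2 i \<le> x2"
proof -
  note t0 = assms(1)
  have t1: "\<theta> < 1" using assms(2) by simp
  have "0 < 9 / (4 * (1 - 3 * \<theta>))" using assms(2) by simp
  hence lam0: "0 < lam" using assms(3) by linarith
  have z1e: "z1 i = lam * (F (z1 (True#i)) (z2 (True#i)) \<theta> * F (z1 (False#i)) (z2 (False#i)) \<theta>)" for i
    using assms(10)[of i] by (simp add: prod_succs)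
  have z2e: "z2 i = lam * (F (z2 (True#i)) (z1 (True#i)) \<theta> * F (z2 (False#i)) (z1 (False#i)) \<theta>)" for i
    using assms(11)[of i] by (simp add: prod_succs)
  define UL where "UL = rec_nat (lam, 0) (\<lambda>_ p. (lam*(F (fst p) (snd p) \<theta>)^2, lam*(F (snd p) (fst p) \<theta>)^2))"
  define U where "U n = fst (UL n)" for n
  define L where "L n = snd (UL n)" for n
  have U0: "U 0 = lam" and L0: "L 0 = 0" by (simp_all add: U_def L_def UL_def)
  have US: "U (Suc n) = lam * (F (U n) (L n) \<theta>)^2" for n by (simp add: U_def L_def UL_def)
  have LS: "L (Suc n) = lam * (F (L n) (U n) \<theta>)^2" for n by (simp add: U_def L_def UL_def)
  have x2le: "x2 \<le> lam"
  proof -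
    have "F x2 x1 \<theta> \<le> 1" "0 < F x2 x1 \<theta>" using t0 t1 assms(4,5) by (auto intro: F_le1 F_pos)
    hence "(F x2 x1 \<theta>)^2 \<le> 1" by (simp add: power_le_one)
    hence "lam*(F x2 x1 \<theta>)^2 \<le> lam*1" using lam0 by (intro mult_left_mono) auto
    thus ?thesis using assms(7) by simp
  qed
  have zle: "z1 i \<le> lam \<and> z2 i \<le> lam" for i
  proof -
    have a: "F a b \<theta> \<le> 1" "0 \<le> F a b \<theta>" if "0 < a" "0 < b" for a b
      using that t0 t1 F_le1[of \<theta> a b] F_pos[of \<theta> a b] by auto
    have "F (z1 (True#i)) (z2 (True#i)) \<theta> * F (z1 (False#i)) (z2 (False#i)) \<theta> \<le> 1"
      using a assms(8,9) by (simp add: mult_le_one)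
    hence 1: "z1 i \<le> lam" unfolding z1e[of i] using lam0 by (intro mult_left_le) auto
    have "F (z2 (True#i)) (z1 (True#i)) \<theta> * F (z2 (False#i)) (z1 (False#i)) \<theta> \<le> 1"
      using a assms(8,9) by (simp add: mult_le_one)
    hence "z2 i \<le> lam" unfolding z2e[of i] using lam0 by (intro mult_left_le) auto
    with 1 show ?thesis by simp
  qed
  have P: "0 \<le> L n \<and> L n \<le> x1 \<and> x2 \<le> U n \<and>
      (\<forall>i. L n \<le> z1 i \<and> z1 i \<le> U n \<and> L n \<le> z2 i \<and> z2 i \<le> U n)" for n
  proof (induction n)
    case 0
    have "0 \<le> z1 i" "0 \<le> z2 i" for i using assms(8,9)[of i] by auto
    thus ?case using U0 L0 x2le zle assms(4) by auto
  next
    case (Suc n)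
    hence h: "0 \<le> L n" "L n \<le> x1" "x2 \<le> U n"
      "\<And>i. L n \<le> z1 i \<and> z1 i \<le> U n \<and> L n \<le> z2 i \<and> z2 i \<le> U n" by auto
    have x: "lam*(F (L n) (U n) \<theta>)^2 \<le> lam*(F a1 b1 \<theta> * F a2 b2 \<theta>) \<and> lam*(F a1 b1 \<theta> * F a2 b2 \<theta>) \<le> lam*(F (U n) (L n) \<theta>)^2"
      if "L n \<le> a1" "a1 \<le> U n" "L n \<le> b1" "b1 \<le> U n" "L n \<le> a2" "a2 \<le> U n" "L n \<le> b2" "b2 \<le> U n"
      for a1 b1 a2 b2
      using step_bound[OF lam0 t0 t1 h(1) that] .
    have "0 < F (L n) (U n) \<theta>" using h assms(4,5) t0 by (intro F_pos) auto
    hence "0 \<le> L (Suc n)" using LS lam0 by simp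
    moreover have "L (Suc n) \<le> x1"
      using x[of x1 x2 x1 x2] h assms(5,6) LS by (simp add: power2_eq_square)
    moreover have "x2 \<le> U (Suc n)"
      using x[of x2 x1 x2 x1] h assms(5,7) US by (simp add: power2_eq_square)
    moreover have "\<forall>i. L (Suc n) \<le> z1 i \<and> z1 i \<le> U (Suc n) \<and> L (Suc n) \<le> z2 i \<and> z2 i \<le> U (Suc n)"
    proof
      fix i
      show "L (Suc n) \<le> z1 i \<and> z1 i \<le> U (Suc n) \<and> L (Suc n) \<le> z2 i \<and> z2 i \<le> U (Suc n)"
        using x[of "z1 (True#i)" "z2 (True#i)" "z1 (False#i)" "z2 (False#i)"]
          x[of "z2 (True#i)" "z1 (True#i)" "z2 (False#i)" "z1 (False#i)"]
          h(4) z1e[of i] z2e[of i] US LS by auto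
    qed
    ultimately show ?case by blast
  qed
  have Fp: "0 < F a b \<theta>" if "0 \<le> a" "0 \<le> b" for a b using that t0 F_pos by auto
  have mono: "U (Suc n) \<le> U n \<and> L n \<le> L (Suc n)" for n
  proof (induction n)
    case 0
    have "F lam 0 \<theta> = 1" using lam0 by (simp add: F_def)
    thus ?case using U0 L0 US LS P[of 1] by simp
  next
    case (Suc n)
    have pos: "0 \<le> L n" "0 \<le> L (Suc n)" "L n \<le> U (Suc n)" "L (Suc n) \<le> U n"
      using P[of n] P[of "Suc n"] assms(5) by auto
    have f1: "F (U (Suc n)) (L (Suc n)) \<theta> \<le> F (U n) (L n) \<theta>"
      using Suc pos t0 t1 by (intro F_mono) auto
    have f2: "F (L n) (U n) \<theta> \<le> F (L (Suc n)) (U (Suc n)) \<theta>"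
      using Suc pos t0 t1 by (intro F_mono) auto
    have g1: "0 < F (U (Suc n)) (L (Suc n)) \<theta>" using pos by (intro Fp) auto
    have g2: "0 < F (L n) (U n) \<theta>" using pos by (intro Fp) auto
    have "(F (U (Suc n)) (L (Suc n)) \<theta>)^2 \<le> (F (U n) (L n) \<theta>)^2"
      using f1 g1 by (intro power_mono) auto
    moreover have "(F (L n) (U n) \<theta>)^2 \<le> (F (L (Suc n)) (U (Suc n)) \<theta>)^2"
      using f2 g2 by (intro power_mono) auto
    ultimately show ?case using US[of "Suc n"] US[of n] LS[of "Suc n"] LS[of n] lam0
      by (simp add: mult_left_mono)
  qed
  have "decseq U" using mono by (simp add: decseq_SucI)
  then obtain Us where Ut: "U \<longlonglongrightarrow> Us" and "\<forall>i. Us \<le> U i"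
    using P by (metis decseq_convergent)
  have "incseq L" using mono by (simp add: incseq_SucI)
  then obtain Ls where Lt: "L \<longlonglongrightarrow> Ls" and "\<forall>i. L i \<le> Ls"
    using P by (metis incseq_convergent)
  have x2Us: "x2 \<le> Us" using Ut P by (intro LIMSEQ_le_const[OF Ut]) auto
  have Lsx1: "Ls \<le> x1" using Lt P by (intro LIMSEQ_le_const2[OF Lt]) auto
  have "L 0 \<le> Ls" using \<open>\<forall>i. L i \<le> Ls\<close> by blast
  hence Ls0: "0 \<le> Ls" using L0 by simp
  have Us0: "0 < Us" using x2Us assms(4,5) by linarith
  have d1: "1 + Us + Ls \<noteq> 0" using Us0 Ls0 by linarith
  have d2: "1 + Ls + Us \<noteq> 0" using Us0 Ls0 by linarith
  have "(\<lambda>n. lam * (F (U n) (L n) \<theta>)^2) \<longlonglongrightarrow> lam * (F Us Ls \<theta>)^2"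
    unfolding F_def using Ut Lt d1 by (intro tendsto_intros) auto
  moreover have "(\<lambda>n. U (Suc n)) \<longlonglongrightarrow> Us" using Ut by (rule LIMSEQ_Suc)
  moreover have "(\<lambda>n. U (Suc n)) = (\<lambda>n. lam * (F (U n) (L n) \<theta>)^2)" using US by (intro ext)
  ultimately have UsE: "Us = lam * (F Us Ls \<theta>)^2" using LIMSEQ_unique by auto
  have "(\<lambda>n. lam * (F (L n) (U n) \<theta>)^2) \<longlonglongrightarrow> lam * (F Ls Us \<theta>)^2"
    unfolding F_def using Ut Lt d2 by (intro tendsto_intros) auto
  moreover have "(\<lambda>n. L (Suc n)) \<longlonglongrightarrow> Ls" using Lt by (rule LIMSEQ_Suc)
  moreover have "(\<lambda>n. L (Suc n)) = (\<lambda>n. lam * (F (L n) (U n) \<theta>)^2)" using LS by (intro ext)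
  ultimately have LsE: "Ls = lam * (F Ls Us \<theta>)^2" using LIMSEQ_unique by auto
  have "0 < lam * (F Ls Us \<theta>)^2" using lam0 Fp[OF Ls0 less_imp_le[OF Us0]] by simp
  hence Lsp: "0 < Ls" using LsE by linarith
  define a where "a = sqrt Us" define b where "b = sqrt Ls"
  define a' where "a' = sqrt x2" define b' where "b' = sqrt x1"
  define c where "c = sqrt lam"
  have sq: "Us = a^2" "Ls = b^2" "x2 = a'^2" "x1 = b'^2"
    unfolding a_def b_def a'_def b'_def using Us0 Lsp assms(4,5) by auto
  have pos: "0 < a" "0 < b" "0 < a'" "0 < b'" "0 < c"
    unfolding a_def b_def a'_def b'_def c_def using Us0 Lsp assms(4,5) lam0 by auto
  have "Ls < Us" using x2Us Lsx1 assms(5) by linarith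
  hence ab1: "b < a" unfolding a_def b_def by simp
  have ab2: "b' < a'" unfolding a'_def b'_def using assms(5) by simp
  note ab = ab1 ab2
  have "a = c * F Us Ls \<theta>" unfolding a_def c_def by (rule sqrt_form[OF t0 t1 Us0 Lsp lam0 UsE])
  hence e1: "a = c * ((1 + a^2 + \<theta>*b^2)/(1 + a^2 + b^2))" by (simp only: F_def sq)
  have "b = c * F Ls Us \<theta>" unfolding b_def c_def by (rule sqrt_form[OF t0 t1 Lsp Us0 lam0 LsE])
  hence e2: "b = c * ((1 + b^2 + \<theta>*a^2)/(1 + b^2 + a^2))" by (simp only: F_def sq)
  have x1p: "0 < x1" and x2p: "0 < x2" using assms(4,5) by auto
  have "a' = c * F x2 x1 \<theta>" unfolding a'_def c_def by (rule sqrt_form[OF t0 t1 x2p x1p lam0 assms(7)])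
  hence e3: "a' = c * ((1 + a'^2 + \<theta>*b'^2)/(1 + a'^2 + b'^2))" by (simp only: F_def sq)
  have "b' = c * F x1 x2 \<theta>" unfolding b'_def c_def by (rule sqrt_form[OF t0 t1 x1p x2p lam0 assms(6)])
  hence e4: "b' = c * ((1 + b'^2 + \<theta>*a'^2)/(1 + b'^2 + a'^2))" by (simp only: F_def sq)
  have E1: "a*(1+a^2+b^2) = c*(1+a^2+\<theta>*b^2)" using conv_eq[OF t0 pos(1,2) e1] .
  have E2: "b*(1+a^2+b^2) = c*(1+b^2+\<theta>*a^2)" using conv_eq[OF t0 pos(2,1) e2] by (simp add: add_ac)
  have E3: "a'*(1+a'^2+b'^2) = c*(1+a'^2+\<theta>*b'^2)" using conv_eq[OF t0 pos(3,4) e3] .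
  have E4: "b'*(1+a'^2+b'^2) = c*(1+b'^2+\<theta>*a'^2)" using conv_eq[OF t0 pos(4,3) e4] by (simp add: add_ac)
  have "a = a' \<and> b = b'" using uniq[OF t0 t1 pos(2) ab(1) pos(4) ab(2) pos(5) E1 E2 E3 E4] .
  hence UsX: "Us = x2" and LsX: "Ls = x1" using sq by auto
  show ?thesis
  proof
    fix i
    have "z1 i \<le> Us" by (rule LIMSEQ_le_const[OF Ut]) (use P in blast)
    moreover have "z2 i \<le> Us" by (rule LIMSEQ_le_const[OF Ut]) (use P in blast)
    moreover have "Ls \<le> z1 i" by (rule LIMSEQ_le_const2[OF Lt]) (use P in blast)
    moreover have "Ls \<le> z2 i" by (rule LIMSEQ_le_const2[OF Lt]) (use P in blast)
    ultimately show "x1 \<le> z1 i \<and> z1 i \<le> x2 \<and> x1 \<le> z2 i \<and> z2 i \<le> x2" using UsX LsX by auto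
  qed
qed

end
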